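(* Let $M$ be a pointed metric space and let $(m_{x_\alpha y_\alpha})_\alpha$ be a net of molecules in $\mathcal F(M)$ which converges weakly to the molecule $m_{xy}$ ($x\neq y$). Then $\lim_\alpha d(x_\alpha,x)=0$ and $\lim_\alpha d(y_\alpha,y)=0$.
   Context: A pointed metric space $M$ has a distinguished origin $0$. $\mathrm{Lip}_0(M)$ is the Banach space of real Lipschitz functions on $M$ vanishing at $0$ with the best Lipschitz constant as norm; $\delta(x)\in\mathrm{Lip}_0(M)^*$ is evaluation at $x$, and $\mathcal F(M)$ is the closed linear span of $\delta(M)$ in $\mathrm{Lip}_0(M)^*$, with $\mathcal F(M)^*=\mathrm{Lip}_0(M)$. For $x\neq y$ in $M$, the molecule is $m_{xy}=(\delta(x)-\delta(y))/d(x,y)$; all $x_\alpha\ne y_\alpha$. *)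

theory Defs
  imports "HOL-Analysis.Analysis"
begin

definition Lip0 :: "'a::metric_space \<Rightarrow> ('a \<Rightarrow> real) set" where
  "Lip0 base = {f. (\<exists>C. C-lipschitz_on UNIV f) \<and> f base = 0}"

text \<open>Action of f in Lip_0(M) = F(M)^* on the molecule m_xy.\<close>
definition mol_app :: "('a::metric_space \<Rightarrow> real) \<Rightarrow> 'a \<Rightarrow> 'a \<Rightarrow> real" where
  "mol_app f x y = (f x - f y) / dist x y"

text \<open>Weak convergence in F(M) of the net of molecules m_{xa i, ya i} (a net is
represented by a filter F on the index type) to m_xy, using F(M)^* = Lip_0(M).\<close>
definition mol_weak_conv ::
  "'a::metric_space \<Rightarrow> ('i \<Rightarrow> 'a) \<Rightarrow> ('i \<Rightarrow> 'a) \<Rightarrow> 'a \<Rightarrow> 'a \<Rightarrow> 'i filter \<Rightarrow> bool" where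
  "mol_weak_conv base xa ya x y F \<longleftrightarrow>
     (\<forall>f \<in> Lip0 base. ((\<lambda>i. mol_app f (xa i) (ya i)) \<longlongrightarrow> mol_app f x y) F)"

end

theory Submission
  imports Defs
begin

lemma bump_lip0:
  fixes base c :: "'a::metric_space"
  shows "(\<lambda>z. s * max 0 (e - dist z c) - s * max 0 (e - dist base c)) \<in> Lip0 base"
proof -
  have "(\<bar>s\<bar>)-lipschitz_on UNIV (\<lambda>z. s * max 0 (e - dist z c) - s * max 0 (e - dist base c))"
  proof (rule lipschitz_onI)
    fix u v :: 'a
    have t: "\<bar>dist u c - dist v c\<bar> \<le> dist u v"
      by (metis abs_le_iff dist_commute dist_triangle2 dist_triangle3 diff_le_eq minus_diff_eq)
    have "\<bar>max 0 (e - dist u c) - max 0 (e - dist v c)\<bar> \<le> \<bar>dist u c - dist v c\<bar>"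
      by (simp add: max_def abs_if)
    then have "\<bar>s\<bar> * \<bar>max 0 (e - dist u c) - max 0 (e - dist v c)\<bar> \<le> \<bar>s\<bar> * dist u v"
      using t by (intro mult_left_mono) auto
    then show "dist (s * max 0 (e - dist u c) - s * max 0 (e - dist base c))
             (s * max 0 (e - dist v c) - s * max 0 (e - dist base c)) \<le> \<bar>s\<bar> * dist u v"
      by (simp add: dist_real_def abs_mult right_diff_distrib[symmetric])
  qed simp
  then show ?thesis unfolding Lip0_def by auto
qed

lemma mol_app_bump:
  "mol_app (\<lambda>z. s * max 0 (e - dist z c) - s * max 0 (e - dist base c)) u v
   = s * (max 0 (e - dist u c) - max 0 (e - dist v c)) / dist u v"
  unfolding mol_app_def by (simp add: algebra_simps)

theorem lemma2p2:
  fixes base x y :: "'a::metric_space" and xa ya :: "'i \<Rightarrow> 'a" and F :: "'i filter"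
  assumes "x \<noteq> y"
    and "\<forall>i. xa i \<noteq> ya i"
    and "mol_weak_conv base xa ya x y F"
  shows "((\<lambda>i. dist (xa i) x) \<longlongrightarrow> 0) F \<and> ((\<lambda>i. dist (ya i) y) \<longlongrightarrow> 0) F"
proof -
  define r where "r = dist x y"
  have r: "r > 0" using assms(1) by (simp add: r_def)
  have conv: "\<And>f. f \<in> Lip0 base \<Longrightarrow> ((\<lambda>i. mol_app f (xa i) (ya i)) \<longlongrightarrow> mol_app f x y) F"
    using assms(3) unfolding mol_weak_conv_def by blast
  have dpos: "\<And>i. dist (xa i) (ya i) > 0" using assms(2) by simp
  show ?thesis
  proof
    show "((\<lambda>i. dist (xa i) x) \<longlongrightarrow> 0) F"
    proof (rule tendstoI)
      fix e :: real assume e: "e > 0"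
      define e' where "e' = min e r"
      have e': "e' > 0" "e' \<le> e" "e' \<le> r" using e r by (auto simp: e'_def)
      let ?f = "\<lambda>z. 1 * max 0 (e' - dist z x) - 1 * max 0 (e' - dist base x)"
      have lim: "((\<lambda>i. mol_app ?f (xa i) (ya i)) \<longlongrightarrow> mol_app ?f x y) F"
        by (rule conv[OF bump_lip0])
      have "mol_app ?f x y = e' / r"
        unfolding mol_app_bump using e' by (simp add: r_def dist_commute)
      then have "0 < mol_app ?f x y" using e' r by simp
      from order_tendstoD(1)[OF lim this]
      show "eventually (\<lambda>i. dist (dist (xa i) x) 0 < e) F"
      proof (rule eventually_mono)
        fix i assume "0 < mol_app ?f (xa i) (ya i)"
        then have "0 < (max 0 (e' - dist (xa i) x) - max 0 (e' - dist (ya i) x)) / dist (xa i) (ya i)"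
          unfolding mol_app_bump by simp
        then have "max 0 (e' - dist (ya i) x) < max 0 (e' - dist (xa i) x)"
          using dpos[of i] by (simp add: zero_less_divide_iff)
        then have "dist (xa i) x < e'" by (auto simp: max_def split: if_splits)
        then show "dist (dist (xa i) x) 0 < e" using e' by simp
      qed
    qed
  next
    show "((\<lambda>i. dist (ya i) y) \<longlongrightarrow> 0) F"
    proof (rule tendstoI)
      fix e :: real assume e: "e > 0"
      define e' where "e' = min e r"
      have e': "e' > 0" "e' \<le> e" "e' \<le> r" using e r by (auto simp: e'_def)
      let ?f = "\<lambda>z. (-1) * max 0 (e' - dist z y) - (-1) * max 0 (e' - dist base y)"
      have lim: "((\<lambda>i. mol_app ?f (xa i) (ya i)) \<longlongrightarrow> mol_app ?f x y) F"
        by (rule conv[OF bump_lip0])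
      have "mol_app ?f x y = e' / r"
        unfolding mol_app_bump using e' by (simp add: r_def dist_commute)
      then have "0 < mol_app ?f x y" using e' r by simp
      from order_tendstoD(1)[OF lim this]
      show "eventually (\<lambda>i. dist (dist (ya i) y) 0 < e) F"
      proof (rule eventually_mono)
        fix i assume "0 < mol_app ?f (xa i) (ya i)"
        then have "0 < (-1) * (max 0 (e' - dist (xa i) y) - max 0 (e' - dist (ya i) y)) / dist (xa i) (ya i)"
          unfolding mol_app_bump by simp
        then have "max 0 (e' - dist (xa i) y) < max 0 (e' - dist (ya i) y)"
          using dpos[of i] by (simp add: zero_less_divide_iff)
        then have "dist (ya i) y < e'" by (auto simp: max_def split: if_splits)
        then show "dist (dist (ya i) y) 0 < e" using e' by simp
      qed
    qed
  qed
qed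

end
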